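(* Let $M,N,B$ be positive integers with $N$ a multiple of $B$, let $\Delta>0$, $T=1/\Delta$, $T_B=NT/B$, and let $c>0$, $\lambda>0$, $\alpha\in\mathbb{C}$. Let $\tau_{\max}\in[0,T)$ and $\nu_{\max}\in[0,\Delta)$, let $v\in[0,\lambda\nu_{\max}]$, and let $r:[0,\infty)\to\mathbb{R}$ satisfy $r(nT)/c\in[0,\tau_{\max}]$ for $n=0,\dots,N-1$ and the $B$-fold stop-and-go condition $r(nT)=r(bT_B)$ whenever $bN/B\le n\le (b+1)N/B-1$, $b=0,\dots,B-1$. Let $g_{\rm tx},g_{\rm rx}\in L^2(\mathbb{R})$ be ideal shaping filters, i.e. their cross-ambiguity function $\gamma(\tau,\nu)=\int_{-\infty}^{\infty}g_{\rm tx}(\beta)g_{\rm rx}^*(\beta-\tau)e^{-\mathrm{i}2\pi\nu(\beta-\tau)}d\beta$ satisfies $\gamma(\tau,\nu)=1$ on $[-\tau_{\max},\tau_{\max}]\times[-\nu_{\max},\nu_{\max}]$ and $\gamma(\tau,\nu)=0$ on $[pT-\tau_{\max},pT+\tau_{\max}]\times[q\Delta-\nu_{\max},q\Delta+\nu_{\max}]$ for every pair of integers $(p,q)\neq(0,0)$. Let $\{X_{\rm DD}[k,l]\}$, $k=0,\dots,N-1$, $l=0,\dots,M-1$, be arbitrary complex numbers, and define $$X_{\rm TF}[n,m]=\frac{1}{\sqrt{NM}}\sum_{k=0}^{N-1}\sum_{l=0}^{M-1}X_{\rm DD}[k,l]e^{\mathrm{i}2\pi\left(\frac{nk}{N}-\frac{ml}{M}\right)},$$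 $x_n(t)=\sum_{m=0}^{M-1}X_{\rm TF}[n,m]g_{\rm tx}(t-nT)e^{\mathrm{i}2\pi m\Delta(t-nT)}$, the received signal $y(t)=\sum_{n=0}^{N-1}\alpha\,x_n\!\left(t-\frac{r(nT)}{c}\right)e^{\mathrm{i}2\pi\frac{v}{\lambda}t}$, $$Y_{\rm TF}[n,m]=\int_{-\infty}^{\infty}y(t)g_{\rm rx}^*(t-nT)e^{-\mathrm{i}2\pi m\Delta(t-nT)}dt,\qquad Y_{\rm DD}[k,l]=\frac{1}{\sqrt{NM}}\sum_{n=0}^{N-1}\sum_{m=0}^{M-1}Y_{\rm TF}[n,m]e^{-\mathrm{i}2\pi\left(\frac{nk}{N}-\frac{ml}{M}\right)},$$ for $n,k=0,\dots,N-1$ and $m,l=0,\dots,M-1$. Then for all $k=0,\dots,N-1$, $l=0,\dots,M-1$, $$Y_{\rm DD}[k,l]=\alpha\sum_{k'=0}^{N-1}\sum_{l'=0}^{M-1}X_{\rm DD}[k',l']\,\Phi[k-k',l-l'],$$ where, for integers $k,l$, $$\Phi[k,l]=\frac{1}{B}\sum_{b=0}^{B-1}e^{-\mathrm{i}2\pi\left(\frac{k}{N}-\frac{vT}{\lambda}\right)\frac{bN}{B}}\,\mathcal{D}_{N/B}\!\left(\frac{k}{N}-\frac{vT}{\lambda}\right)\mathcal{D}_{M}\!\left(-\left(\frac{l}{M}-\frac{r(bT_B)\Delta}{c}\right)\right).$$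
   Context: $\mathrm{i}$ is the imaginary unit and $(\cdot)^*$ is complex conjugation. For a positive integer $Q$, $\mathcal{D}_Q(\nu)=\frac{1}{Q}\sum_{q=0}^{Q-1}e^{-\mathrm{i}2\pi\nu q}$ (the periodic sinc / Dirichlet function). Physically, $c$ is the speed of light, $\lambda$ the carrier wavelength, $r$ the excess target range, $v$ the excess range-rate, $\alpha$ the target amplitude, $M$ the number of subcarriers, $N$ the number of symbol intervals, $\Delta$ the subcarrier spacing. *)

theory Defs
  imports "HOL-Analysis.Analysis"
begin

definition dirichlet :: "nat \<Rightarrow> real \<Rightarrow> complex" where
  "dirichlet Q \<nu> = (1 / of_nat Q) * (\<Sum>q<Q. exp (- \<i> * of_real (2 * pi * \<nu> * real q)))"

definition square_integrable :: "(real \<Rightarrow> complex) \<Rightarrow> bool" where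
  "square_integrable g \<longleftrightarrow> g \<in> borel_measurable lborel \<and>
     integrable lborel (\<lambda>t. (norm (g t))\<^sup>2)"

definition cross_amb :: "(real \<Rightarrow> complex) \<Rightarrow> (real \<Rightarrow> complex) \<Rightarrow> real \<Rightarrow> real \<Rightarrow> complex" where
  "cross_amb gtx grx \<tau> \<nu> =
     (LINT \<beta>|lborel. gtx \<beta> * cnj (grx (\<beta> - \<tau>)) * exp (- \<i> * of_real (2 * pi * \<nu> * (\<beta> - \<tau>))))"

definition ideal_filters :: "(real \<Rightarrow> complex) \<Rightarrow> (real \<Rightarrow> complex) \<Rightarrow> real \<Rightarrow> real \<Rightarrow> real \<Rightarrow> real \<Rightarrow> bool" where
  "ideal_filters gtx grx \<tau>max \<nu>max T \<Delta> \<longleftrightarrow>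
     (\<forall>\<tau> \<nu>. \<tau> \<in> {-\<tau>max..\<tau>max} \<and> \<nu> \<in> {-\<nu>max..\<nu>max} \<longrightarrow> cross_amb gtx grx \<tau> \<nu> = 1) \<and>
     (\<forall>p q :: int. (p, q) \<noteq> (0, 0) \<longrightarrow>
        (\<forall>\<tau> \<nu>. \<tau> \<in> {of_int p * T - \<tau>max .. of_int p * T + \<tau>max} \<and>
                 \<nu> \<in> {of_int q * \<Delta> - \<nu>max .. of_int q * \<Delta> + \<nu>max} \<longrightarrow>
                 cross_amb gtx grx \<tau> \<nu> = 0))"

definition X_TF :: "nat \<Rightarrow> nat \<Rightarrow> (nat \<Rightarrow> nat \<Rightarrow> complex) \<Rightarrow> nat \<Rightarrow> nat \<Rightarrow> complex" where
  "X_TF N M XDD n m = (1 / of_real (sqrt (real (N * M)))) *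
     (\<Sum>k<N. \<Sum>l<M. XDD k l *
        exp (\<i> * of_real (2 * pi * (real n * real k / real N - real m * real l / real M))))"

definition x_sym :: "nat \<Rightarrow> real \<Rightarrow> real \<Rightarrow> (real \<Rightarrow> complex) \<Rightarrow> (nat \<Rightarrow> nat \<Rightarrow> complex) \<Rightarrow> nat \<Rightarrow> real \<Rightarrow> complex" where
  "x_sym M T \<Delta> gtx XTF n t = (\<Sum>m<M. XTF n m * gtx (t - real n * T) *
      exp (\<i> * of_real (2 * pi * real m * \<Delta> * (t - real n * T))))"

definition y_rx :: "nat \<Rightarrow> nat \<Rightarrow> real \<Rightarrow> real \<Rightarrow> (real \<Rightarrow> complex) \<Rightarrow> (nat \<Rightarrow> nat \<Rightarrow> complex)
     \<Rightarrow> complex \<Rightarrow> (real \<Rightarrow> real) \<Rightarrow> real \<Rightarrow> real \<Rightarrow> real \<Rightarrow> real \<Rightarrow> complex" where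
  "y_rx N M T \<Delta> gtx XTF \<alpha> r c v lam t = (\<Sum>n<N. \<alpha> * x_sym M T \<Delta> gtx XTF n (t - r (real n * T) / c) *
      exp (\<i> * of_real (2 * pi * (v / lam) * t)))"

definition Y_TF :: "real \<Rightarrow> real \<Rightarrow> (real \<Rightarrow> complex) \<Rightarrow> (real \<Rightarrow> complex) \<Rightarrow> nat \<Rightarrow> nat \<Rightarrow> complex" where
  "Y_TF T \<Delta> grx y n m = (LINT t|lborel. y t * cnj (grx (t - real n * T)) *
      exp (- \<i> * of_real (2 * pi * real m * \<Delta> * (t - real n * T))))"

definition Y_DD :: "nat \<Rightarrow> nat \<Rightarrow> (nat \<Rightarrow> nat \<Rightarrow> complex) \<Rightarrow> nat \<Rightarrow> nat \<Rightarrow> complex" where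
  "Y_DD N M YTF k l = (1 / of_real (sqrt (real (N * M)))) *
     (\<Sum>n<N. \<Sum>m<M. YTF n m *
        exp (- \<i> * of_real (2 * pi * (real n * real k / real N - real m * real l / real M))))"

definition Phi :: "nat \<Rightarrow> nat \<Rightarrow> nat \<Rightarrow> real \<Rightarrow> real \<Rightarrow> real \<Rightarrow> real \<Rightarrow> real \<Rightarrow> (real \<Rightarrow> real) \<Rightarrow> int \<Rightarrow> int \<Rightarrow> complex" where
  "Phi N M B T \<Delta> c v lam r k l =
     (1 / of_nat B) * (\<Sum>b<B.
        exp (- \<i> * of_real (2 * pi * (real_of_int k / real N - v * T / lam) * (real b * real N / real B))) *
        dirichlet (N div B) (real_of_int k / real N - v * T / lam) *
        dirichlet M (- (real_of_int l / real M - r (real b * (real N * T / real B)) * \<Delta> / c)))"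

end

theory Submission
  imports Defs
begin

lemma sq_shift_int:
  assumes "square_integrable g"
  shows "integrable lborel (\<lambda>t. (norm (g (t - a)))\<^sup>2)"
proof -
  have "integrable lborel (\<lambda>t. (norm (g t))\<^sup>2)" using assms by (simp add: square_integrable_def)
  from lborel_integrable_real_affine[OF this, of 1 "-a"] show ?thesis by simp
qed

lemma ab_le: "(x::real) \<ge> 0 \<Longrightarrow> y \<ge> 0 \<Longrightarrow> x * y \<le> x\<^sup>2 + y\<^sup>2"
proof -
  assume "x \<ge> 0" "y \<ge> 0"
  then have "0 \<le> x * y" by simp
  moreover have "0 \<le> (x - y)\<^sup>2" by simp
  ultimately show ?thesis by (simp add: power2_eq_square algebra_simps)
qed

lemma prod_int:
  assumes f: "square_integrable f" and g: "square_integrable g"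
  and phi: "continuous_on UNIV \<phi>"
  shows "integrable lborel (\<lambda>t. f (t - a) * cnj (g (t - b)) * exp (\<i> * of_real (\<phi> t)))"
proof (rule Bochner_Integration.integrable_bound[where f="\<lambda>t. (norm (f (t - a)))\<^sup>2 + (norm (g (t - b)))\<^sup>2"])
  show "integrable lborel (\<lambda>t. (norm (f (t - a)))\<^sup>2 + (norm (g (t - b)))\<^sup>2)"
    using sq_shift_int[OF f] sq_shift_int[OF g] by auto
  have fb: "f \<in> borel_measurable borel" and gb: "g \<in> borel_measurable borel"
    using f g by (auto simp: square_integrable_def)
  have sa: "(\<lambda>t::real. t - a) \<in> borel_measurable borel" "(\<lambda>t::real. t - b) \<in> borel_measurable borel"
    by (intro borel_measurable_continuous_onI continuous_intros)+
  have m1: "(\<lambda>t. f (t - a)) \<in> borel_measurable borel"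
    using measurable_compose[OF sa(1) fb] by (simp add: o_def)
  have m2: "(\<lambda>t. cnj (g (t - b))) \<in> borel_measurable borel"
    using measurable_compose[OF measurable_compose[OF sa(2) gb] borel_measurable_continuous_onI[OF continuous_on_cnj[OF continuous_on_id]]]
    by (simp add: o_def)
  have m3: "(\<lambda>t. exp (\<i> * of_real (\<phi> t))) \<in> borel_measurable borel"
    by (intro borel_measurable_continuous_onI continuous_intros phi)
  show "(\<lambda>t. f (t - a) * cnj (g (t - b)) * exp (\<i> * of_real (\<phi> t))) \<in> borel_measurable lborel"
    using borel_measurable_times[OF borel_measurable_times[OF m1 m2] m3] by simp
  show "AE x in lborel. norm (f (x - a) * cnj (g (x - b)) * exp (\<i> * complex_of_real (\<phi> x)))
         \<le> norm ((norm (f (x - a)))\<^sup>2 + (norm (g (x - b)))\<^sup>2)"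
  proof (rule AE_I2)
    fix x
    have "norm (exp (\<i> * complex_of_real (\<phi> x))) = 1" by (simp add: norm_exp_i_times)
    moreover have "norm (f (x - a)) * norm (g (x - b)) \<le> (norm (f (x - a)))\<^sup>2 + (norm (g (x - b)))\<^sup>2"
      by (rule ab_le) auto
    ultimately show "norm (f (x - a) * cnj (g (x - b)) * exp (\<i> * complex_of_real (\<phi> x)))
         \<le> norm ((norm (f (x - a)))\<^sup>2 + (norm (g (x - b)))\<^sup>2)"
      by (simp add: norm_mult)
  qed
qed

lemma amb_val:
  assumes idf: "ideal_filters gtx grx \<tau>max \<nu>max T \<Delta>"
    and tau: "0 \<le> \<tau>n" "\<tau>n \<le> \<tau>max" and nu: "0 \<le> \<nu>" "\<nu> \<le> \<nu>max"
  shows "cross_amb gtx grx (real n * T - (\<tau>n + real n' * T)) (real m * \<Delta> - real m' * \<Delta> - \<nu>)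
     = (if n' = n \<and> m' = m then 1 else 0)"
proof (cases "n' = n \<and> m' = m")
  case True
  then show ?thesis using idf tau nu unfolding ideal_filters_def by auto
next
  case False
  define p where "p = int n - int n'"
  define q where "q = int m - int m'"
  have pq: "(p, q) \<noteq> (0, 0)" using False by (auto simp: p_def q_def)
  have e1: "real n * T - (\<tau>n + real n' * T) = of_int p * T - \<tau>n"
    by (simp add: p_def algebra_simps)
  have e2: "real m * \<Delta> - real m' * \<Delta> - \<nu> = of_int q * \<Delta> - \<nu>"
    by (simp add: q_def algebra_simps)
  have "cross_amb gtx grx (of_int p * T - \<tau>n) (of_int q * \<Delta> - \<nu>) = 0"
    using idf pq tau nu unfolding ideal_filters_def by auto
  then show ?thesis using False unfolding e1 e2 by simp
qed

lemma core:
  "(LINT t|lborel. f (t - a) * cnj (g (t - b)) *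
      exp (\<i> * of_real (2 * pi * (\<mu> * (t - a) + \<nu> * t - \<omega> * (t - b))))) =
   exp (\<i> * of_real (2 * pi * (\<mu> * (b - a) + \<nu> * b))) * cross_amb f g (b - a) (\<omega> - \<mu> - \<nu>)"
proof -
  have "cross_amb f g (b - a) (\<omega> - \<mu> - \<nu>) =
     (LINT x|lborel. f (-a + 1 * x) * cnj (g ((-a + 1 * x) - (b - a))) *
        exp (- \<i> * of_real (2 * pi * (\<omega> - \<mu> - \<nu>) * ((-a + 1 * x) - (b - a)))))"
    unfolding cross_amb_def by (subst lborel_integral_real_affine[where c=1 and t="-a"]) auto
  also have "\<dots> = (LINT x|lborel. f (x - a) * cnj (g (x - b)) *
        exp (- \<i> * of_real (2 * pi * (\<omega> - \<mu> - \<nu>) * (x - b))))"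
    by simp
  finally have ca: "cross_amb f g (b - a) (\<omega> - \<mu> - \<nu>) = \<dots>" .
  have pt: "f (t - a) * cnj (g (t - b)) *
      exp (\<i> * of_real (2 * pi * (\<mu> * (t - a) + \<nu> * t - \<omega> * (t - b)))) =
      exp (\<i> * of_real (2 * pi * (\<mu> * (b - a) + \<nu> * b))) * (f (t - a) * cnj (g (t - b)) *
        exp (- \<i> * of_real (2 * pi * (\<omega> - \<mu> - \<nu>) * (t - b))))" for t
  proof -
    have "exp (\<i> * of_real (2 * pi * (\<mu> * (t - a) + \<nu> * t - \<omega> * (t - b)))) =
      exp (\<i> * of_real (2 * pi * (\<mu> * (b - a) + \<nu> * b)) + (- \<i> * of_real (2 * pi * (\<omega> - \<mu> - \<nu>) * (t - b))))"
      by (rule arg_cong[where f=exp]) (simp add: algebra_simps)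
    then show ?thesis by (simp only: exp_add ac_simps)
  qed
  show ?thesis unfolding ca pt by simp
qed

lemma term_eq:
  "\<alpha> * (X * gtx (t - s - u) * exp (\<i> * of_real (2 * pi * mm * D * (t - s - u)))) *
     exp (\<i> * of_real (2 * pi * nu * t)) * G * exp (- \<i> * of_real (2 * pi * m * D * (t - w)))
   = (\<alpha> * X) * (gtx (t - (s + u)) * G *
       exp (\<i> * of_real (2 * pi * (mm * D * (t - (s + u)) + nu * t - m * D * (t - w)))))"
proof -
  have "exp (\<i> * of_real (2 * pi * (mm * D * (t - (s + u)) + nu * t - m * D * (t - w)))) =
    exp (\<i> * of_real (2 * pi * mm * D * (t - s - u)) + \<i> * of_real (2 * pi * nu * t)
         + (- \<i> * of_real (2 * pi * m * D * (t - w))))"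
    by (rule arg_cong[where f=exp]) (simp add: algebra_simps)
  then show ?thesis by (simp only: exp_add diff_diff_eq ac_simps)
qed

lemma YTF_formula:
  fixes XTF :: "nat \<Rightarrow> nat \<Rightarrow> complex"
  assumes gi: "square_integrable gtx" and ri: "square_integrable grx"
    and idf: "ideal_filters gtx grx \<tau>max \<nu>max T \<Delta>"
    and tau: "\<forall>n<N. r (real n * T) / c \<in> {0..\<tau>max}"
    and nu: "0 \<le> v / lam" "v / lam \<le> \<nu>max"
    and n: "n < N" and m: "m < M"
  shows "Y_TF T \<Delta> grx (y_rx N M T \<Delta> gtx XTF \<alpha> r c v lam) n m =
     (\<alpha> * XTF n m) * exp (\<i> * of_real (2 * pi * (real m * \<Delta> * (real n * T - (r (real n * T) / c + real n * T))
        + v / lam * (real n * T))))"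
proof -
  define a where "a n' = r (real n' * T) / c + real n' * T" for n'
  define h where "h n' m' t = gtx (t - a n') * cnj (grx (t - real n * T)) *
     exp (\<i> * of_real (2 * pi * (real m' * \<Delta> * (t - a n') + v / lam * t - real m * \<Delta> * (t - real n * T))))"
    for n' m' t
  have pw: "y_rx N M T \<Delta> gtx XTF \<alpha> r c v lam t * cnj (grx (t - real n * T)) *
      exp (- \<i> * of_real (2 * pi * real m * \<Delta> * (t - real n * T))) =
      (\<Sum>n'<N. \<Sum>m'<M. (\<alpha> * XTF n' m') * h n' m' t)" for t
    unfolding y_rx_def x_sym_def h_def a_def sum_distrib_left sum_distrib_right
    apply (intro sum.cong refl)
    apply (rule term_eq)
    done
  have ints: "integrable lborel (h n' m')" for n' m'
    unfolding h_def
    by (rule prod_int[OF gi ri]) (intro continuous_intros)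
  have hv: "integral\<^sup>L lborel (h n' m') =
      (if n' = n \<and> m' = m then exp (\<i> * of_real (2 * pi * (real m' * \<Delta> * (real n * T - a n') + v / lam * (real n * T)))) else 0)" if "n' < N" for n' m'
  proof -
    have "integral\<^sup>L lborel (h n' m') =
      exp (\<i> * of_real (2 * pi * (real m' * \<Delta> * (real n * T - a n') + v / lam * (real n * T)))) *
      cross_amb gtx grx (real n * T - a n') (real m * \<Delta> - real m' * \<Delta> - v / lam)"
      unfolding h_def by (rule core)
    also have "cross_amb gtx grx (real n * T - a n') (real m * \<Delta> - real m' * \<Delta> - v / lam)
        = (if n' = n \<and> m' = m then 1 else 0)"
      unfolding a_def
      by (rule amb_val[OF idf]) (use tau that nu in auto)
    finally show ?thesis by simp
  qed
  have "Y_TF T \<Delta> grx (y_rx N M T \<Delta> gtx XTF \<alpha> r c v lam) n m =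
      (LINT t|lborel. (\<Sum>n'<N. \<Sum>m'<M. (\<alpha> * XTF n' m') * h n' m' t))"
    unfolding Y_TF_def pw ..
  also have "\<dots> = (\<Sum>n'<N. \<Sum>m'<M. (\<alpha> * XTF n' m') * integral\<^sup>L lborel (h n' m'))"
    using ints by (simp add: integral_sum)
  also have "\<dots> = (\<Sum>n'<N. \<Sum>m'<M. if n' = n \<and> m' = m then (\<alpha> * XTF n' m') *
      exp (\<i> * of_real (2 * pi * (real m' * \<Delta> * (real n * T - a n') + v / lam * (real n * T)))) else 0)"
    by (intro sum.cong refl) (simp add: hv)
  also have "\<dots> = (\<Sum>n'<N. if n' = n then (\<Sum>m'<M. if m' = m then (\<alpha> * XTF n' m') *
      exp (\<i> * of_real (2 * pi * (real m' * \<Delta> * (real n * T - a n') + v / lam * (real n * T)))) else 0) else 0)"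
    by (intro sum.cong refl) auto
  also have "\<dots> = (\<alpha> * XTF n m) * exp (\<i> * of_real (2 * pi * (real m * \<Delta> * (real n * T - a n) + v / lam * (real n * T))))"
    using n m by simp
  finally show ?thesis unfolding a_def .
qed

lemma e3: "exp (\<i> * of_real a) * exp (\<i> * of_real b) * exp (- \<i> * of_real d) = exp (\<i> * of_real (a + b - d))"
proof -
  have "exp (\<i> * of_real (a + b - d)) = exp (\<i> * of_real a + \<i> * of_real b + (- \<i> * of_real d))"
    by (rule arg_cong[where f=exp]) (simp add: algebra_simps)
  then show ?thesis by (simp only: exp_add)
qed

lemma e3m: "exp (- \<i> * of_real a) * exp (- \<i> * of_real b) * exp (- \<i> * of_real d) = exp (\<i> * of_real (- a - b - d))"
proof -
  have "exp (\<i> * of_real (- a - b - d)) = exp (- \<i> * of_real a + (- \<i> * of_real b) + (- \<i> * of_real d))"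
    by (rule arg_cong[where f=exp]) (simp add: algebra_simps)
  then show ?thesis by (simp only: exp_add)
qed

lemma block_sum:
  fixes g :: "nat \<Rightarrow> 'a::comm_monoid_add"
  shows "(\<Sum>n<B * K. g n) = (\<Sum>b<B. \<Sum>q<K. g (b * K + q))"
proof -
  have "(\<Sum>n<B * K. g n) = (\<Sum>b<B. sum g {b * K..<b * K + K})"
    by (rule sum.nat_group[symmetric])
  also have "\<dots> = (\<Sum>b<B. \<Sum>q<K. g (b * K + q))"
  proof (rule sum.cong[OF refl])
    fix b
    show "sum g {b * K..<b * K + K} = (\<Sum>q<K. g (b * K + q))"
      using sum.shift_bounds_nat_ivl[of g 0 "b * K" K]
      by (simp add: atLeast0LessThan add.commute)
  qed
  finally show ?thesis .
qed

lemma swap4: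
  "(\<Sum>n\<in>A. \<Sum>m\<in>B. \<Sum>k\<in>C. \<Sum>l\<in>D. F n m k l) = (\<Sum>k\<in>C. \<Sum>l\<in>D. \<Sum>n\<in>A. \<Sum>m\<in>B. F n m k l)"
proof -
  have "(\<Sum>n\<in>A. \<Sum>m\<in>B. \<Sum>k\<in>C. \<Sum>l\<in>D. F n m k l) = (\<Sum>n\<in>A. \<Sum>k\<in>C. \<Sum>l\<in>D. \<Sum>m\<in>B. F n m k l)"
  proof (rule sum.cong[OF refl])
    fix n
    have "(\<Sum>m\<in>B. \<Sum>k\<in>C. \<Sum>l\<in>D. F n m k l) = (\<Sum>k\<in>C. \<Sum>m\<in>B. \<Sum>l\<in>D. F n m k l)"
      by (rule sum.swap)
    also have "\<dots> = (\<Sum>k\<in>C. \<Sum>l\<in>D. \<Sum>m\<in>B. F n m k l)"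
      by (rule sum.cong[OF refl], rule sum.swap)
    finally show "(\<Sum>m\<in>B. \<Sum>k\<in>C. \<Sum>l\<in>D. F n m k l) = (\<Sum>k\<in>C. \<Sum>l\<in>D. \<Sum>m\<in>B. F n m k l)" .
  qed
  also have "\<dots> = (\<Sum>k\<in>C. \<Sum>n\<in>A. \<Sum>l\<in>D. \<Sum>m\<in>B. F n m k l)"
    by (rule sum.swap)
  also have "\<dots> = (\<Sum>k\<in>C. \<Sum>l\<in>D. \<Sum>n\<in>A. \<Sum>m\<in>B. F n m k l)"
    by (rule sum.cong[OF refl], rule sum.swap)
  finally show ?thesis .
qed

lemma W_eq:
  fixes k k' l l' :: nat
  assumes NK: "N = B * K" and B: "B > 0" and K: "K > 0" and M: "M > 0" and c: "c \<noteq> 0" and lam: "lam \<noteq> 0"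
    and stop: "\<And>b q. b < B \<Longrightarrow> q < K \<Longrightarrow> r (real (b * K + q) * T) = r (real b * (real N * T / real B))"
  shows "(1 / of_nat (N * M)) * (\<Sum>n<N. \<Sum>m<M.
      exp (\<i> * of_real (2 * pi * (real n * real k' / real N - real m * real l' / real M))) *
      exp (\<i> * of_real (2 * pi * (real m * \<Delta> * (real n * T - (r (real n * T) / c + real n * T)) + v / lam * (real n * T)))) *
      exp (- \<i> * of_real (2 * pi * (real n * real k / real N - real m * real l / real M))))
    = Phi N M B T \<Delta> c v lam r (int k - int k') (int l - int l')"
proof -
  define x where "x = real_of_int (int k - int k') / real N - v * T / lam"
  define y where "y b = - (real_of_int (int l - int l') / real M - r (real b * (real N * T / real B)) * \<Delta> / c)" for b
  define P where "P b = exp (- \<i> * of_real (2 * pi * x * (real b * real N / real B)))" for b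
  define Q where "Q q = exp (- \<i> * of_real (2 * pi * x * real q))" for q
  define R where "R b m = exp (- \<i> * of_real (2 * pi * y b * real m))" for b m
  define \<theta> where "\<theta> n m = 2 * pi * (real n * real k' / real N - real m * real l' / real M) +
      2 * pi * (real m * \<Delta> * (real n * T - (r (real n * T) / c + real n * T)) + v / lam * (real n * T)) -
      2 * pi * (real n * real k / real N - real m * real l / real M)" for n m
  have NB: "N div B = K" using NK B by simp
  have Nz: "real N > 0" using NK B K by simp
  have lhs: "(\<Sum>n<N. \<Sum>m<M.
      exp (\<i> * of_real (2 * pi * (real n * real k' / real N - real m * real l' / real M))) *
      exp (\<i> * of_real (2 * pi * (real m * \<Delta> * (real n * T - (r (real n * T) / c + real n * T)) + v / lam * (real n * T)))) *
      exp (- \<i> * of_real (2 * pi * (real n * real k / real N - real m * real l / real M))))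
    = (\<Sum>b<B. \<Sum>q<K. \<Sum>m<M. exp (\<i> * of_real (\<theta> (b * K + q) m)))"
    unfolding e3 \<theta>_def NK by (rule block_sum)
  have th: "\<theta> (b * K + q) m = - (2 * pi * x * (real b * real N / real B)) - 2 * pi * x * real q - 2 * pi * y b * real m"
    if "b < B" "q < K" for b q m
  proof -
    have rr: "r (real (b * K + q) * T) = r (real b * (real N * T / real B))" using stop that by blast
    have bn: "real b * real N / real B = real b * real K" using NK B by simp
    show ?thesis unfolding \<theta>_def rr x_def y_def bn
      by (simp add: divide_inverse algebra_simps)
  qed
  have rhs: "Phi N M B T \<Delta> c v lam r (int k - int k') (int l - int l') =
     (1 / of_nat B) * (\<Sum>b<B. P b * ((1 / of_nat K) * (\<Sum>q<K. Q q)) * ((1 / of_nat M) * (\<Sum>m<M. R b m)))"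
    unfolding Phi_def dirichlet_def NB P_def Q_def R_def x_def y_def by simp
  also have "\<dots> = (1 / of_nat (N * M)) * (\<Sum>b<B. \<Sum>q<K. \<Sum>m<M. P b * Q q * R b m)"
  proof -
    have pb: "P b * ((1 / of_nat K) * (\<Sum>q<K. Q q)) * ((1 / of_nat M) * (\<Sum>m<M. R b m)) =
        (1 / (of_nat K * of_nat M)) * (\<Sum>q<K. \<Sum>m<M. P b * Q q * R b m)" for b
    proof -
      have "(\<Sum>q<K. \<Sum>m<M. P b * Q q * R b m) = P b * ((\<Sum>q<K. Q q) * (\<Sum>m<M. R b m))"
        unfolding sum_product by (simp only: sum_distrib_left mult.assoc)
      then show ?thesis by simp
    qed
    have "(1 / of_nat B) * (\<Sum>b<B. P b * ((1 / of_nat K) * (\<Sum>q<K. Q q)) * ((1 / of_nat M) * (\<Sum>m<M. R b m)))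
       = (1 / of_nat B) * (\<Sum>b<B. (1 / (of_nat K * of_nat M)) * (\<Sum>q<K. \<Sum>m<M. P b * Q q * R b m))"
      by (simp only: pb)
    also have "\<dots> = ((1 / of_nat B) * (1 / (of_nat K * of_nat M))) * (\<Sum>b<B. \<Sum>q<K. \<Sum>m<M. P b * Q q * R b m)"
      by (simp add: sum_distrib_left mult.assoc)
    also have "(1 / of_nat B) * (1 / (of_nat K * of_nat M)) = (1 / of_nat (N * M) :: complex)"
      unfolding NK by simp
    finally show ?thesis .
  qed
  also have "\<dots> = (1 / of_nat (N * M)) * (\<Sum>b<B. \<Sum>q<K. \<Sum>m<M. exp (\<i> * of_real (\<theta> (b * K + q) m)))"
    unfolding P_def Q_def R_def e3m
    by (intro arg_cong[where f="\<lambda>z. _ * z"] sum.cong refl) (simp add: th)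
  finally show ?thesis unfolding lhs by simp
qed

theorem proposition2:
  fixes M N B :: nat and \<Delta> T TB c lam \<tau>max \<nu>max v :: real and \<alpha> :: complex
    and r :: "real \<Rightarrow> real" and gtx grx :: "real \<Rightarrow> complex"
    and XDD :: "nat \<Rightarrow> nat \<Rightarrow> complex"
  assumes "M > 0" and "N > 0" and "B > 0" and "B dvd N"
    and "\<Delta> > 0" and "T = 1 / \<Delta>" and "TB = real N * T / real B"
    and "c > 0" and "lam > 0"
    and "\<tau>max \<in> {0..<T}" and "\<nu>max \<in> {0..<\<Delta>}" and "v \<in> {0..lam * \<nu>max}"
    and "\<forall>n<N. r (real n * T) / c \<in> {0..\<tau>max}"
    and "\<forall>b<B. \<forall>n. b * N div B \<le> n \<and> n \<le> (b + 1) * N div B - 1 \<longrightarrow>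
            r (real n * T) = r (real b * TB)"
    and "square_integrable gtx" and "square_integrable grx"
    and "ideal_filters gtx grx \<tau>max \<nu>max T \<Delta>"
  shows "\<forall>k<N. \<forall>l<M.
           Y_DD N M (Y_TF T \<Delta> grx (y_rx N M T \<Delta> gtx (X_TF N M XDD) \<alpha> r c v lam)) k l =
           \<alpha> * (\<Sum>k'<N. \<Sum>l'<M. XDD k' l' *
                   Phi N M B T \<Delta> c v lam r (int k - int k') (int l - int l'))"
proof (intro allI impI)
  fix k l assume k: "k < N" and l: "l < M"
  obtain K where NK: "N = B * K" using assms(4) by (rule dvdE)
  have K: "K > 0" using NK assms(2) by (cases K) auto
  have lam0: "lam \<noteq> 0" and c0: "c \<noteq> 0" using assms(8,9) by auto
  have stop: "r (real (b * K + q) * T) = r (real b * (real N * T / real B))" if "b < B" "q < K" for b q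
  proof -
    have e1: "b * N div B = b * K" using NK assms(3) by simp
    have e2: "(b + 1) * N div B = (b + 1) * K" using NK assms(3) by simp
    have "b * N div B \<le> b * K + q \<and> b * K + q \<le> (b + 1) * N div B - 1"
      unfolding e1 e2 using that by simp
    then have "r (real (b * K + q) * T) = r (real b * TB)" using assms(14) that(1) by blast
    then show ?thesis using assms(7) by simp
  qed
  have nu: "0 \<le> v / lam" "v / lam \<le> \<nu>max"
    using assms(9,12) by (auto simp: divide_le_eq mult.commute)
  define E where "E n m = exp (\<i> * of_real (2 * pi * (real m * \<Delta> * (real n * T - (r (real n * T) / c + real n * T))
        + v / lam * (real n * T))))" for n m
  define YT where "YT = Y_TF T \<Delta> grx (y_rx N M T \<Delta> gtx (X_TF N M XDD) \<alpha> r c v lam)"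
  have Y: "YT n m = \<alpha> * X_TF N M XDD n m * E n m" if "n < N" "m < M" for n m
    unfolding YT_def E_def
    by (rule YTF_formula[OF assms(15,16,17,13) nu that])
  define s where "s = complex_of_real (sqrt (real (N * M)))"
  define A where "A n m k' l' = exp (\<i> * of_real (2 * pi * (real n * real k' / real N - real m * real l' / real M)))" for n m k' l'
  define C where "C n m = exp (- \<i> * of_real (2 * pi * (real n * real k / real N - real m * real l / real M)))" for n m
  define F where "F k' l' = (\<Sum>n<N. \<Sum>m<M. A n m k' l' * E n m * C n m)" for k' l'
  have ss: "s * s = of_nat (N * M)"
    unfolding s_def of_real_mult[symmetric] real_sqrt_mult_self by simp
  have "Y_DD N M YT k l = 1 / s * (\<Sum>n<N. \<Sum>m<M. (\<alpha> * X_TF N M XDD n m * E n m) * C n m)"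
    unfolding Y_DD_def s_def C_def using Y
    by (intro arg_cong[where f="\<lambda>z. _ * z"] sum.cong refl) simp
  also have "\<dots> = 1 / s * (\<Sum>n<N. \<Sum>m<M. (\<alpha> * ((1 / s) * (\<Sum>k'<N. \<Sum>l'<M. XDD k' l' * A n m k' l')) * E n m) * C n m)"
    unfolding X_TF_def A_def s_def ..
  also have "\<dots> = 1 / s * (\<Sum>n<N. \<Sum>m<M. \<Sum>k'<N. \<Sum>l'<M. (\<alpha> * (1 / s)) * (XDD k' l' * (A n m k' l' * E n m * C n m)))"
    by (intro arg_cong[where f="\<lambda>z. _ * z"] sum.cong refl) (simp only: sum_distrib_left sum_distrib_right mult.assoc)
  also have "\<dots> = (\<Sum>n<N. \<Sum>m<M. \<Sum>k'<N. \<Sum>l'<M. (1 / s * (\<alpha> * (1 / s))) * (XDD k' l' * (A n m k' l' * E n m * C n m)))"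
    unfolding sum_distrib_left mult.assoc ..
  also have "\<dots> = (\<Sum>k'<N. \<Sum>l'<M. \<Sum>n<N. \<Sum>m<M. (1 / s * (\<alpha> * (1 / s))) * (XDD k' l' * (A n m k' l' * E n m * C n m)))"
    by (rule swap4)
  also have "\<dots> = (\<Sum>k'<N. \<Sum>l'<M. (1 / s * (\<alpha> * (1 / s))) * (XDD k' l' * F k' l'))"
    unfolding F_def sum_distrib_left ..
  also have "\<dots> = \<alpha> * (\<Sum>k'<N. \<Sum>l'<M. XDD k' l' * ((1 / of_nat (N * M)) * F k' l'))"
    unfolding sum_distrib_left ss[symmetric] by (intro sum.cong refl) (simp add: divide_inverse mult_ac)
  also have "\<dots> = \<alpha> * (\<Sum>k'<N. \<Sum>l'<M. XDD k' l' * Phi N M B T \<Delta> c v lam r (int k - int k') (int l - int l'))"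
    unfolding F_def A_def E_def C_def
    by (intro arg_cong[where f="\<lambda>z. _ * z"] sum.cong refl arg_cong[where f="\<lambda>z. _ * z"])
       (rule W_eq[OF NK assms(3) K assms(1) c0 lam0 stop])
  finally show "Y_DD N M (Y_TF T \<Delta> grx (y_rx N M T \<Delta> gtx (X_TF N M XDD) \<alpha> r c v lam)) k l = \<alpha> * (\<Sum>k'<N. \<Sum>l'<M. XDD k' l' * Phi N M B T \<Delta> c v lam r (int k - int k') (int l - int l'))"
    unfolding YT_def .
qed

end
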